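(* Let $S \in \mathbb{Z}^{m\times m}$ be a nonsingular Smith form, $T \in \mathbb{Z}^{m\times m}$ a nonsingular matrix in Hermite form, $A \in \mathbb{Z}^{a\times m}$ and $F\in\mathbb{Z}^{f\times m}$ (with $a,f\ge 0$), such that every row of $S$ and of $A$ lies in $\mathcal{L}(T)$. Consider, with column blocks of sizes $f,m,a,m$, $$M = \begin{bmatrix} I_f & F & 0 & 0 \\ 0 & T & 0 & I_m \\ 0 & A & I_a & 0 \\ 0 & S & 0 & 0\end{bmatrix}.$$ Then: (1) The Hermite form of $M$ has the shape $\begin{bmatrix} I_f & G & 0 & Q \\ 0 & T & 0 & X \\ 0 & 0 & I_a & C \\ 0 & 0 & 0 & K\end{bmatrix}$ for some integer blocks $G\in\mathbb{Z}^{f\times m}$, $Q\in\mathbb{Z}^{f\times m}$, $X\in\mathbb{Z}^{m\times m}$, $C \in\mathbb{Z}^{a\times m}$, $K\in\mathbb{Z}^{m\times m}$. (2) $\begin{bmatrix} I_a & C\\ 0 & K\end{bmatrix}$ is the Hermite form of the integer matrix $\begin{bmatrix} I_a & -AT^{-1} \\ 0 & -ST^{-1}\end{bmatrix}$. (3) There is a unimodular matrix of the form $\bar U = \begin{bmatrix} I_f & Q & 0 & Y_2 \\ 0 & I_m & 0 & 0 \\ 0 & C & I_a & Y_3 \\ 0 & K & 0 & Y_4\end{bmatrix}$ (for some integer blocks $Y_2,Y_3,Y_4$, with $G,Q,C,K$ as in (1)) such that $$\bar U M = \begin{bmatrix} I_f & G & 0 & Q \\ 0 & T & 0 & I_m \\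 0 & 0 & I_a & C \\ 0 & 0 & 0 & K\end{bmatrix}.$$
   Context: For an integer matrix $A$, $\mathcal{L}(A)$ denotes the lattice of all $\mathbb{Z}$-linear combinations of the rows of $A$. A nonsingular square integer matrix is in Hermite form if it is upper triangular with positive diagonal entries $h_j$ and each entry above the diagonal in column $j$ lies in $[0,h_j)$; every nonsingular integer matrix $B$ has a unique Hermite form $WB$ with $W$ unimodular. A Smith form is a diagonal matrix $\mathrm{diag}(s_1,\dots,s_m)$ with nonnegative integer entries and $s_i \mid s_{i+1}$; it is nonsingular if all $s_i>0$. *)

theory Defs
  imports "Jordan_Normal_Form.Gauss_Jordan_Elimination" "Jordan_Normal_Form.Determinant"
begin

definition int_lattice :: "int mat \<Rightarrow> int vec set" where
  "int_lattice A = {transpose_mat A *\<^sub>v c | c. c \<in> carrier_vec (dim_row A)}"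

definition is_hermite :: "int mat \<Rightarrow> bool" where
  "is_hermite H \<longleftrightarrow> square_mat H \<and>
     (\<forall>i j. j < i \<and> i < dim_row H \<longrightarrow> H $$ (i,j) = 0) \<and>
     (\<forall>j < dim_row H. H $$ (j,j) > 0) \<and>
     (\<forall>i j. i < j \<and> j < dim_row H \<longrightarrow> 0 \<le> H $$ (i,j) \<and> H $$ (i,j) < H $$ (j,j))"

definition unimodular :: "int mat \<Rightarrow> bool" where
  "unimodular W \<longleftrightarrow> invertible_mat W"

definition hermite_form_of :: "int mat \<Rightarrow> int mat \<Rightarrow> bool" where
  "hermite_form_of H B \<longleftrightarrow> is_hermite H \<and>
     (\<exists>W. W \<in> carrier_mat (dim_row B) (dim_row B) \<and> unimodular W \<and> H = W * B)"

definition nonsingular_smith :: "int mat \<Rightarrow> bool" where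
  "nonsingular_smith S \<longleftrightarrow> square_mat S \<and>
     (\<forall>i j. i < dim_row S \<and> j < dim_row S \<and> i \<noteq> j \<longrightarrow> S $$ (i,j) = 0) \<and>
     (\<forall>i < dim_row S. S $$ (i,i) > 0) \<and>
     (\<forall>i. Suc i < dim_row S \<longrightarrow> S $$ (i,i) dvd S $$ (Suc i, Suc i))"

definition rat_inv :: "int mat \<Rightarrow> rat mat" where
  "rat_inv T = the (mat_inverse (map_mat rat_of_int T))"

(* 2x2 and 4x4 block matrices, rows of blocks given left to right *)
abbreviation blk2 :: "'a mat \<Rightarrow> 'a mat \<Rightarrow> 'a mat \<Rightarrow> 'a mat \<Rightarrow> 'a mat" where
  "blk2 \<equiv> four_block_mat"

definition blk4 :: "'a mat \<Rightarrow> 'a mat \<Rightarrow> 'a mat \<Rightarrow> 'a mat \<Rightarrow>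
                    'a mat \<Rightarrow> 'a mat \<Rightarrow> 'a mat \<Rightarrow> 'a mat \<Rightarrow>
                    'a mat \<Rightarrow> 'a mat \<Rightarrow> 'a mat \<Rightarrow> 'a mat \<Rightarrow>
                    'a mat \<Rightarrow> 'a mat \<Rightarrow> 'a mat \<Rightarrow> 'a mat \<Rightarrow> 'a mat" where
  "blk4 A11 A12 A13 A14 A21 A22 A23 A24 A31 A32 A33 A34 A41 A42 A43 A44 =
     four_block_mat
       (four_block_mat A11 A12 A21 A22) (four_block_mat A13 A14 A23 A24)
       (four_block_mat A31 A32 A41 A42) (four_block_mat A33 A34 A43 A44)"

end

theory Submission
  imports Defs
begin


lemma mult_entry:
  assumes "A \<in> carrier_mat n k" "B \<in> carrier_mat k l" "i < n" "j < l"
  shows "(A*B) $$ (i,j) = (\<Sum>r<k. A$$(i,r) * B$$(r,j))"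
  using assms by (auto simp: scalar_prod_def lessThan_atLeast0 intro!: sum.cong)

lemma unimod_iff:
  fixes W :: "int mat" assumes W: "W \<in> carrier_mat n n"
  shows "invertible_mat W \<longleftrightarrow> is_unit (det W)"
proof
  assume "invertible_mat W"
  then obtain B where WB: "W * B = 1\<^sub>m n" and BW: "B * W = 1\<^sub>m (dim_row B)"
    using W unfolding invertible_mat_def inverts_mat_def by auto
  have "dim_col B = n" using arg_cong[OF WB, of dim_col] by simp
  moreover have "dim_row B = n" using arg_cong[OF BW, of dim_col] W by simp
  ultimately have B: "B \<in> carrier_mat n n" by auto
  have "det W * det B = 1" using det_mult[OF W B] WB by simp
  then show "is_unit (det W)" by (metis dvd_triv_left)
next
  assume "is_unit (det W)"
  then obtain e where e: "1 = det W * e" by (rule dvdE)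
  define B where "B = e \<cdot>\<^sub>m adj_mat W"
  have aW: "adj_mat W \<in> carrier_mat n n" using adj_mat[OF W] by auto
  have B: "B \<in> carrier_mat n n" using aW unfolding B_def by auto
  have "W * B = e \<cdot>\<^sub>m (W * adj_mat W)" unfolding B_def using mult_smult_distrib[OF W aW] by simp
  also have "\<dots> = 1\<^sub>m n" using adj_mat(2)[OF W] e by (intro eq_matI) (auto simp: ac_simps)
  finally have 1: "W * B = 1\<^sub>m n" .
  have "B * W = e \<cdot>\<^sub>m (adj_mat W * W)" unfolding B_def using mult_smult_assoc_mat[OF aW W] by simp
  also have "\<dots> = 1\<^sub>m n" using adj_mat(3)[OF W] e by (intro eq_matI) (auto simp: ac_simps)
  finally have 2: "B * W = 1\<^sub>m n" .
  show "invertible_mat W" unfolding invertible_mat_def inverts_mat_def using W B 1 2 by auto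
qed

lemma unimod_mult:
  fixes A B :: "int mat"
  assumes "A \<in> carrier_mat n n" "B \<in> carrier_mat n n" "invertible_mat A" "invertible_mat B"
  shows "invertible_mat (A * B)"
  using assms by (simp add: unimod_iff[of _ n] det_mult[of _ n] abs_mult)

lemma prod_list_units: "(\<forall>x\<in>set xs. is_unit (x::int)) \<Longrightarrow> is_unit (prod_list xs)"
  by (induct xs) (auto simp: abs_mult)

lemma unimod_triangular:
  fixes E :: "int mat"
  assumes E: "E \<in> carrier_mat n n" and ut: "upper_triangular E"
    and d: "\<And>i. i < n \<Longrightarrow> is_unit (E $$ (i,i))"
  shows "invertible_mat E"
proof -
  have "det E = prod_list (diag_mat E)" by (rule det_upper_triangular[OF ut E])
  moreover have "\<forall>x\<in>set (diag_mat E). is_unit x" using d E by (auto simp: diag_mat_def)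
  ultimately show ?thesis using unimod_iff[OF E] prod_list_units by simp
qed

definition reach :: "nat \<Rightarrow> int mat \<Rightarrow> int mat \<Rightarrow> bool" where
  "reach n B H \<longleftrightarrow> (\<exists>W. W \<in> carrier_mat n n \<and> invertible_mat W \<and> H = W * B)"

lemma reach_refl: "B \<in> carrier_mat n k \<Longrightarrow> reach n B B"
  unfolding reach_def
  by (rule exI[of _ "1\<^sub>m n"]) (auto simp: invertible_mat_def inverts_mat_def intro!: exI[of _ "1\<^sub>m n"])

lemma reach_step:
  assumes "reach n B H" "B \<in> carrier_mat n k" "E \<in> carrier_mat n n" "invertible_mat E"
  shows "reach n B (E * H)"
proof -
  obtain W where W: "W \<in> carrier_mat n n" "invertible_mat W" "H = W * B"
    using assms(1) unfolding reach_def by auto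
  have "E * H = (E * W) * B" using W assms by simp
  then show ?thesis unfolding reach_def using W assms unimod_mult[of E n W]
    by (intro exI[of _ "E * W"]) auto
qed

lemma reach_carrier: "reach n B H \<Longrightarrow> B \<in> carrier_mat n k \<Longrightarrow> H \<in> carrier_mat n k"
  unfolding reach_def by auto

lemma reach_det: "reach n B H \<Longrightarrow> B \<in> carrier_mat n n \<Longrightarrow> det B \<noteq> 0 \<Longrightarrow> det H \<noteq> 0"
proof -
  assume a: "reach n B H" "B \<in> carrier_mat n n" "det B \<noteq> 0"
  then obtain W where W: "W \<in> carrier_mat n n" "invertible_mat W" "H = W * B" unfolding reach_def by auto
  then have "det H = det W * det B" using det_mult a by auto
  moreover have "det W \<noteq> 0" using W unimod_iff by fastforce
  ultimately show "det H \<noteq> 0" using a by simp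
qed

definition bez_op :: "nat \<Rightarrow> nat \<Rightarrow> int \<Rightarrow> int \<Rightarrow> int \<Rightarrow> int \<Rightarrow> int mat \<Rightarrow> int mat" where
  "bez_op j i u v s t B = mat (dim_row B) (dim_col B) (\<lambda>(r,c).
     if r = j then u * B$$(j,c) + v * B$$(i,c)
     else if r = i then s * B$$(j,c) + t * B$$(i,c) else B$$(r,c))"

lemma bez_op_carrier[simp]: "bez_op j i u v s t B \<in> carrier_mat (dim_row B) (dim_col B)"
  "dim_row (bez_op j i u v s t B) = dim_row B" "dim_col (bez_op j i u v s t B) = dim_col B"
  unfolding bez_op_def by auto

lemma bez_op_index: "r < dim_row B \<Longrightarrow> c < dim_col B \<Longrightarrow> bez_op j i u v s t B $$ (r,c) =
     (if r = j then u * B$$(j,c) + v * B$$(i,c)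
     else if r = i then s * B$$(j,c) + t * B$$(i,c) else B$$(r,c))"
  unfolding bez_op_def by auto

lemma bez_op_mult:
  assumes B: "B \<in> carrier_mat n k" and ji: "j < n" "i < n" "j \<noteq> i"
  shows "bez_op j i u v s t (1\<^sub>m n) * B = bez_op j i u v s t B"
proof (rule eq_matI)
  fix r c assume r: "r < dim_row (bez_op j i u v s t B)" and c: "c < dim_col (bez_op j i u v s t B)"
  have rn: "r < n" and ck: "c < k" using r c B by auto
  have E: "bez_op j i u v s t (1\<^sub>m n) \<in> carrier_mat n n" using bez_op_carrier(1)[of j i u v s t "1\<^sub>m n"] by simp
  have "(bez_op j i u v s t (1\<^sub>m n) * B) $$ (r,c) = (\<Sum>l<n. bez_op j i u v s t (1\<^sub>m n) $$ (r,l) * B $$ (l,c))"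
    by (rule mult_entry[OF E B rn ck])
  also have "\<dots> = (\<Sum>l<n. (if r = j then u * (if j = l then 1 else 0) + v * (if i = l then 1 else 0)
     else if r = i then s * (if j = l then 1 else 0) + t * (if i = l then 1 else 0) else (if r = l then 1 else 0)) * B $$ (l,c))"
    using rn ji by (intro sum.cong refl) (simp add: bez_op_index)
  also have "\<dots> = bez_op j i u v s t B $$ (r,c)"
  proof -
    have d: "\<And>a. a < n \<Longrightarrow> (\<Sum>l<n. (if a = l then 1 else 0) * B $$ (l,c)) = B $$ (a,c)"
    proof -
      fix a assume "a < n"
      have "(\<Sum>l<n. (if a = l then 1 else 0) * B $$ (l,c)) = (\<Sum>l<n. if a = l then B$$(a,c) else 0)"
        by (rule sum.cong) auto
      also have "\<dots> = B $$ (a,c)" using \<open>a < n\<close> by simp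
      finally show "(\<Sum>l<n. (if a = l then 1 else 0) * B $$ (l,c)) = B $$ (a,c)" .
    qed
    have lin: "(\<Sum>l<n. (x * (if j = l then 1 else 0) + y * (if i = l then 1 else 0)) * B $$ (l,c))
       = x * B$$(j,c) + y * B$$(i,c)" for x y :: int
    proof -
      have "(\<Sum>l<n. (x * (if j = l then 1 else 0) + y * (if i = l then 1 else 0)) * B $$ (l,c))
        = x * (\<Sum>l<n. (if j = l then 1 else 0) * B $$ (l,c)) + y * (\<Sum>l<n. (if i = l then 1 else 0) * B $$ (l,c))"
        by (simp add: distrib_right sum.distrib sum_distrib_left mult.assoc)
      then show ?thesis using d ji by simp
    qed
    show ?thesis
      using rn ji ck B d[of r] lin by (simp add: bez_op_index)
  qed
  finally show "(bez_op j i u v s t (1\<^sub>m n) * B) $$ (r,c) = bez_op j i u v s t B $$ (r,c)" .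
qed (insert B, auto)

lemma bez_op_inv:
  assumes ji: "j < dim_row B" "i < dim_row B" "j \<noteq> i" and d: "u * t - v * s = 1"
  shows "bez_op j i t (-v) (-s) u (bez_op j i u v s t B) = B"
proof (rule eq_matI)
  fix r c assume r: "r < dim_row B" and c: "c < dim_col B"
  have e1: "t * (u * x + v * y) + - v * (s * x + t * y) = x" for x y :: int
  proof -
    have "t * (u * x + v * y) + - v * (s * x + t * y) = (u * t - v * s) * x" by (simp add: algebra_simps)
    then show ?thesis using d by simp
  qed
  have e2: "- s * (u * x + v * y) + u * (s * x + t * y) = y" for x y :: int
  proof -
    have "- s * (u * x + v * y) + u * (s * x + t * y) = (u * t - v * s) * y" by (simp add: algebra_simps)
    then show ?thesis using d by simp
  qed
  show "bez_op j i t (- v) (- s) u (bez_op j i u v s t B) $$ (r, c) = B $$ (r, c)"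
    using r c ji e1 e2 by (simp add: bez_op_index)
qed auto

lemma bez_invertible:
  assumes ji: "j < n" "i < n" "j \<noteq> i" and d: "u * t - v * s = 1"
  shows "invertible_mat (bez_op j i u v s t (1\<^sub>m n))"
proof -
  let ?E = "bez_op j i u v s t (1\<^sub>m n)"
  let ?F = "bez_op j i t (-v) (-s) u (1\<^sub>m n)"
  have E: "?E \<in> carrier_mat n n" and F: "?F \<in> carrier_mat n n"
    using bez_op_carrier(1)[of _ _ _ _ _ _ "1\<^sub>m n"] by auto
  have "?F * ?E = bez_op j i t (-v) (-s) u ?E" by (rule bez_op_mult[OF E ji])
  also have "\<dots> = 1\<^sub>m n" using bez_op_inv[of j "1\<^sub>m n" i u t v s] ji d by simp
  finally have 1: "?F * ?E = 1\<^sub>m n" .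
  have "?E * ?F = bez_op j i u v s t ?F" by (rule bez_op_mult[OF F ji])
  also have "\<dots> = 1\<^sub>m n" using bez_op_inv[of j "1\<^sub>m n" i t u "-v" "-s"] ji d by (simp add: mult.commute)
  finally have 2: "?E * ?F = 1\<^sub>m n" .
  show ?thesis unfolding invertible_mat_def inverts_mat_def using E F 1 2 by auto
qed

lemma reach_bez:
  assumes "reach n B H" "B \<in> carrier_mat n k" "j < n" "i < n" "j \<noteq> i" "u * t - v * s = 1"
  shows "reach n B (bez_op j i u v s t H)"
proof -
  have H: "H \<in> carrier_mat n k" using reach_carrier assms by blast
  have "bez_op j i u v s t H = bez_op j i u v s t (1\<^sub>m n) * H"
    using bez_op_mult[OF H assms(3-5)] by simp
  then show ?thesis using reach_step[OF assms(1,2) _ bez_invertible[OF assms(3-6)]]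
    using bez_op_carrier(1)[of _ _ _ _ _ _ "1\<^sub>m n"] by auto
qed

definition tri :: "nat \<Rightarrow> nat \<Rightarrow> nat \<Rightarrow> int mat \<Rightarrow> bool" where
  "tri n j k H \<longleftrightarrow> (\<forall>c r. c < j \<longrightarrow> c < r \<longrightarrow> r < n \<longrightarrow> H$$(r,c) = 0) \<and>
     (\<forall>r. j < r \<longrightarrow> r < k \<longrightarrow> r < n \<longrightarrow> H$$(r,j) = 0)"

lemma tri_step:
  assumes R: "reach n B H" and B: "B \<in> carrier_mat n n" and jk: "j < k" "k < n" and T: "tri n j k H"
  shows "\<exists>H'. reach n B H' \<and> tri n j (Suc k) H'"
proof (cases "H $$ (k,j) = 0")
  case True
  then show ?thesis using R T unfolding tri_def by (metis less_SucE)
next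
  case False
  have H: "H \<in> carrier_mat n n" using reach_carrier[OF R B] .
  define x where "x = H $$ (j,j)"
  define y where "y = H $$ (k,j)"
  define g where "g = gcd x y"
  have g0: "g \<noteq> 0" using False unfolding g_def y_def by simp
  obtain u v where uv: "u * x + v * y = g" unfolding g_def using bezout_int by blast
  define s where "s = - (y div g)"
  define t where "t = x div g"
  have xg: "x = t * g" unfolding t_def g_def by simp
  have yg: "y = - s * g" unfolding s_def g_def by simp
  have "g * (u * t - v * s) = g * 1" using uv unfolding xg yg by (simp add: algebra_simps)
  then have d: "u * t - v * s = 1" using g0 by (metis mult_cancel_left)
  have kj: "k \<noteq> j" "j < n" using jk by auto
  define H' where "H' = bez_op j k u v s t H"
  have R': "reach n B H'" unfolding H'_def by (rule reach_bez[OF R B kj(2) jk(2) kj(1)[symmetric] d])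
  have "tri n j (Suc k) H'"
    unfolding tri_def
  proof (intro conjI allI impI)
    fix c r assume cr: "c < j" "c < r" "r < n"
    have "H $$ (j,c) = 0" "H $$ (k,c) = 0" "H $$ (r,c) = 0" using T cr jk unfolding tri_def by auto
    then show "H' $$ (r,c) = 0" unfolding H'_def using cr H jk by (simp add: bez_op_index)
  next
    fix r assume r: "j < r" "r < Suc k" "r < n"
    show "H' $$ (r,j) = 0"
    proof (cases "r = k")
      case True
      have "s * x + t * y = 0" unfolding xg yg by (simp add: algebra_simps)
      then show ?thesis unfolding H'_def using True r H jk by (simp add: bez_op_index x_def y_def)
    next
      case False
      then have "H $$ (r,j) = 0" using T r unfolding tri_def by auto
      then show ?thesis unfolding H'_def using False r H jk by (simp add: bez_op_index)
    qed
  qed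
  then show ?thesis using R' by blast
qed

lemma tri_col:
  assumes R: "reach n B H" and B: "B \<in> carrier_mat n n" and j: "j < n" and T: "tri n j (Suc j) H"
  shows "\<exists>H'. reach n B H' \<and> tri n (Suc j) (Suc (Suc j)) H'"
proof -
  have "\<forall>d. Suc j + d \<le> n \<longrightarrow> (\<exists>H'. reach n B H' \<and> tri n j (Suc j + d) H')"
  proof
    fix d show "Suc j + d \<le> n \<longrightarrow> (\<exists>H'. reach n B H' \<and> tri n j (Suc j + d) H')"
    proof (induct d)
      case 0 then show ?case using R T by auto
    next
      case (Suc d)
      show ?case
      proof
        assume le: "Suc j + Suc d \<le> n"
        then obtain H' where "reach n B H'" "tri n j (Suc j + d) H'" using Suc by auto
        from tri_step[OF this(1) B _ _ this(2)] le show "\<exists>H'. reach n B H' \<and> tri n j (Suc j + Suc d) H'"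
          by auto
      qed
    qed
  qed
  from this[rule_format, of "n - Suc j"] j obtain H' where H': "reach n B H'" "tri n j n H'" by auto
  have "tri n (Suc j) (Suc (Suc j)) H'" using H'(2) unfolding tri_def by (auto simp: less_Suc_eq)
  then show ?thesis using H'(1) by blast
qed

lemma triangularize:
  assumes B: "B \<in> carrier_mat n n"
  shows "\<exists>H. reach n B H \<and> upper_triangular H"
proof -
  have "\<forall>j. j \<le> n \<longrightarrow> (\<exists>H. reach n B H \<and> tri n j (Suc j) H)"
  proof
    fix j show "j \<le> n \<longrightarrow> (\<exists>H. reach n B H \<and> tri n j (Suc j) H)"
    proof (induct j)
      case 0 then show ?case using reach_refl[OF B] by (auto simp: tri_def)
    next
      case (Suc j)
      show ?case
      proof
        assume "Suc j \<le> n"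
        then obtain H where "reach n B H" "tri n j (Suc j) H" using Suc by auto
        from tri_col[OF this(1) B _ this(2)] \<open>Suc j \<le> n\<close> show "\<exists>H. reach n B H \<and> tri n (Suc j) (Suc (Suc j)) H" by auto
      qed
    qed
  qed
  from this[rule_format, of n] obtain H where H: "reach n B H" "tri n n (Suc n) H" by auto
  have "H \<in> carrier_mat n n" using reach_carrier[OF H(1) B] .
  then have "upper_triangular H" using H(2) unfolding tri_def upper_triangular_def by auto
  then show ?thesis using H(1) by blast
qed

lemma sum_delta_mult: "a < (n::nat) \<Longrightarrow> (\<Sum>l<n. (if a = l then x else 0) * (f l :: int)) = x * f a"
proof -
  assume a: "a < n"
  have "(\<Sum>l<n. (if a = l then x else 0) * f l) = (\<Sum>l<n. if a = l then x * f a else 0)"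
    by (rule sum.cong) auto
  also have "\<dots> = x * f a" using a by (simp only: sum.delta' finite_lessThan lessThan_iff if_True)
  finally show ?thesis .
qed

lemma positive_diag:
  assumes R: "reach n B H" and B: "B \<in> carrier_mat n n" and ut: "upper_triangular H" and d: "det H \<noteq> 0"
  shows "\<exists>H'. reach n B H' \<and> upper_triangular H' \<and> (\<forall>i<n. H' $$ (i,i) > 0)"
proof -
  have H: "H \<in> carrier_mat n n" using reach_carrier[OF R B] .
  have "prod_list (diag_mat H) \<noteq> 0" using det_upper_triangular[OF ut H] d by simp
  then have nz: "\<And>i. i < n \<Longrightarrow> H $$ (i,i) \<noteq> 0" using H by (auto simp: diag_mat_def prod_list_zero_iff)
  define E where "E = mat n n (\<lambda>(i,j). if i = j then sgn (H $$ (i,i)) else 0)"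
  have E: "E \<in> carrier_mat n n" unfolding E_def by auto
  have Einv: "invertible_mat E"
    by (rule unimod_triangular[OF E]) (auto simp: E_def upper_triangular_def nz abs_sgn)
  define H' where "H' = E * H"
  have H'i: "H' $$ (i,j) = sgn (H $$ (i,i)) * H $$ (i,j)" if "i < n" "j < n" for i j
  proof -
    have "H' $$ (i,j) = (\<Sum>l<n. E $$ (i,l) * H $$ (l,j))" unfolding H'_def by (rule mult_entry[OF E H that])
    also have "\<dots> = (\<Sum>l<n. (if i = l then sgn (H $$ (i,i)) else 0) * H $$ (l,j))"
      by (rule sum.cong) (auto simp: E_def that)
    also have "\<dots> = sgn (H $$ (i,i)) * H $$ (i,j)" by (rule sum_delta_mult[OF that(1)])
    finally show ?thesis .
  qed
  have H'c: "H' \<in> carrier_mat n n" unfolding H'_def using E H by auto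
  have "reach n B H'" unfolding H'_def by (rule reach_step[OF R B E Einv])
  moreover have "upper_triangular H'" using H'c H'i ut H unfolding upper_triangular_def by auto
  moreover have "\<forall>i<n. H' $$ (i,i) > 0"
  proof (intro allI impI)
    fix i assume i: "i < n"
    then have "H $$ (i,i) \<noteq> 0" by (rule nz)
    then show "H' $$ (i,i) > 0" using H'i[OF i i] by (auto simp: sgn_if)
  qed
  ultimately show ?thesis by blast
qed

definition red3 :: "nat \<Rightarrow> nat \<Rightarrow> int mat \<Rightarrow> bool" where
  "red3 n c H \<longleftrightarrow> upper_triangular H \<and> (\<forall>i<n. H $$ (i,i) > 0) \<and>
     (\<forall>i j. i < j \<longrightarrow> j < c \<longrightarrow> j < n \<longrightarrow> 0 \<le> H $$ (i,j) \<and> H $$ (i,j) < H $$ (j,j))"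

lemma red3_step:
  assumes R: "reach n B H" and B: "B \<in> carrier_mat n n" and c: "c < n" and RH: "red3 n c H"
  shows "\<exists>H'. reach n B H' \<and> red3 n (Suc c) H'"
proof -
  have H: "H \<in> carrier_mat n n" using reach_carrier[OF R B] .
  have ut: "upper_triangular H" and dp: "\<And>i. i < n \<Longrightarrow> H $$ (i,i) > 0"
    and rd: "\<And>i j. i < j \<Longrightarrow> j < c \<Longrightarrow> 0 \<le> H $$ (i,j) \<and> H $$ (i,j) < H $$ (j,j)"
    using RH c unfolding red3_def by auto
  have z: "\<And>i j. j < i \<Longrightarrow> i < n \<Longrightarrow> H $$ (i,j) = 0" using ut H by auto
  define q where "q i = H $$ (i,c) div H $$ (c,c)" for i
  define E where "E = mat n n (\<lambda>(i,l). (if i = l then 1 else 0) - (if l = c \<and> i < c then q i else 0))"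
  have E: "E \<in> carrier_mat n n" unfolding E_def by auto
  have Einv: "invertible_mat E"
    by (rule unimod_triangular[OF E]) (auto simp: E_def upper_triangular_def)
  define H' where "H' = E * H"
  have H'i: "H' $$ (i,j) = H $$ (i,j) - (if i < c then q i * H $$ (c,j) else 0)" if "i < n" "j < n" for i j
  proof -
    have "H' $$ (i,j) = (\<Sum>l<n. E $$ (i,l) * H $$ (l,j))" unfolding H'_def by (rule mult_entry[OF E H that])
    also have "\<dots> = (\<Sum>l<n. (if i = l then 1 else 0) * H $$ (l,j) - (if c = l then (if i < c then q i else 0) else 0) * H $$ (l,j))"
      by (rule sum.cong) (auto simp: E_def that left_diff_distrib)
    also have "\<dots> = H $$ (i,j) - (if i < c then q i else 0) * H $$ (c,j)"
      by (simp add: sum_subtractf sum_delta_mult[OF that(1)] sum_delta_mult[OF c])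
    finally show ?thesis by simp
  qed
  have H'c: "H' \<in> carrier_mat n n" unfolding H'_def using E H by auto
  have "reach n B H'" unfolding H'_def by (rule reach_step[OF R B E Einv])
  moreover have "red3 n (Suc c) H'"
    unfolding red3_def
  proof (intro conjI)
    show "upper_triangular H'" unfolding upper_triangular_def using H'c H'i z c
      by auto
    show "\<forall>i<n. H' $$ (i,i) > 0"
    proof (intro allI impI)
      fix i assume i: "i < n"
      show "H' $$ (i,i) > 0" using H'i[OF i i] dp[OF i] z[of i c] c i by auto
    qed
    show "\<forall>i j. i < j \<longrightarrow> j < Suc c \<longrightarrow> j < n \<longrightarrow> 0 \<le> H' $$ (i,j) \<and> H' $$ (i,j) < H' $$ (j,j)"
    proof (intro allI impI)
    fix i j assume ij: "i < j" "j < Suc c" "j < n"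
    show "0 \<le> H' $$ (i,j) \<and> H' $$ (i,j) < H' $$ (j,j)"
    proof (cases "j < c")
      case True
      have "H $$ (c,j) = 0" using z c True by auto
      then show ?thesis using H'i ij rd[of i j] c True by auto
    next
      case False
      then have jc: "j = c" using ij by auto
      have "H' $$ (i,j) = H $$ (i,c) mod H $$ (c,c)" using H'i[of i j] ij jc
        by (simp add: q_def minus_div_mult_eq_mod)
      moreover have "H' $$ (j,j) = H $$ (c,c)" using H'i[of j j] ij jc by simp
      ultimately show ?thesis using dp[OF c] by simp
    qed
    qed
  qed
  ultimately show ?thesis by blast
qed

lemma hnf_exists:
  assumes B: "B \<in> carrier_mat n n" and d: "det B \<noteq> 0"
  shows "\<exists>W. W \<in> carrier_mat n n \<and> invertible_mat W \<and> is_hermite (W * B)"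
proof -
  obtain H where H: "reach n B H" "upper_triangular H" using triangularize[OF B] by blast
  obtain H1 where H1: "reach n B H1" "upper_triangular H1" "\<forall>i<n. H1 $$ (i,i) > 0"
    using positive_diag[OF H(1) B H(2) reach_det[OF H(1) B d]] by blast
  have "\<forall>c. c \<le> n \<longrightarrow> (\<exists>H'. reach n B H' \<and> red3 n c H')"
  proof
    fix c show "c \<le> n \<longrightarrow> (\<exists>H'. reach n B H' \<and> red3 n c H')"
    proof (induct c)
      case 0 then show ?case using H1 by (auto simp: red3_def)
    next
      case (Suc c)
      then show ?case using red3_step[OF _ B] by (meson Suc_le_lessD less_imp_le_nat)
    qed
  qed
  from this[rule_format, of n] obtain H' where H': "reach n B H'" "red3 n n H'" by auto
  have Hc: "H' \<in> carrier_mat n n" using reach_carrier[OF H'(1) B] .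
  have "is_hermite H'" using H'(2) Hc unfolding red3_def is_hermite_def upper_triangular_def
    by auto
  then show ?thesis using H'(1) unfolding reach_def by auto
qed

definition red :: "int mat \<Rightarrow> int mat \<Rightarrow> bool" where
  "red B D \<longleftrightarrow> (\<forall>i<dim_row B. \<forall>j<dim_col B. 0 \<le> B$$(i,j) \<and> B$$(i,j) < D$$(j,j))"

lemma reduce_exists:
  assumes K: "K \<in> carrier_mat m m" and KH: "is_hermite K" and P: "P \<in> carrier_mat r m"
  shows "\<exists>Z. Z \<in> carrier_mat r m \<and> red (P + Z * K) K"
proof -
  have Kz: "\<And>i j. j < i \<Longrightarrow> i < m \<Longrightarrow> K $$ (i,j) = 0" and Kp: "\<And>j. j < m \<Longrightarrow> K $$ (j,j) > 0"
    using KH K unfolding is_hermite_def by auto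
  have ent: "(P + Z * K) $$ (i,j) = P $$ (i,j) + (\<Sum>l<m. Z $$ (i,l) * K $$ (l,j))"
    if "Z \<in> carrier_mat r m" "i < r" "j < m" for Z i j
    using that P K mult_entry[OF that(1) K that(2,3)] by simp
  have "\<forall>c. c \<le> m \<longrightarrow> (\<exists>Z. Z \<in> carrier_mat r m \<and>
      (\<forall>i<r. \<forall>j<c. 0 \<le> (P + Z * K) $$ (i,j) \<and> (P + Z * K) $$ (i,j) < K $$ (j,j)))"
  proof
    fix c show "c \<le> m \<longrightarrow> (\<exists>Z. Z \<in> carrier_mat r m \<and>
      (\<forall>i<r. \<forall>j<c. 0 \<le> (P + Z * K) $$ (i,j) \<and> (P + Z * K) $$ (i,j) < K $$ (j,j)))"
    proof (induct c)
      case 0 then show ?case by (intro impI exI[of _ "0\<^sub>m r m"]) auto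
    next
      case (Suc c)
      show ?case
      proof
        assume cm: "Suc c \<le> m"
        then obtain Z where Z: "Z \<in> carrier_mat r m"
          and IH: "\<forall>i<r. \<forall>j<c. 0 \<le> (P + Z * K) $$ (i,j) \<and> (P + Z * K) $$ (i,j) < K $$ (j,j)"
          using Suc by auto
        have c: "c < m" using cm by auto
        define q where "q i = (P + Z * K) $$ (i,c) div K $$ (c,c)" for i
        define D where "D = mat r m (\<lambda>(i,l). if l = c then q i else 0)"
        have D: "D \<in> carrier_mat r m" unfolding D_def by auto
        have Z': "Z - D \<in> carrier_mat r m" using Z D by auto
        have new: "(P + (Z - D) * K) $$ (i,j) = (P + Z * K) $$ (i,j) - q i * K $$ (c,j)"
          if ij: "i < r" "j < m" for i j
        proof -
          have "(P + (Z - D) * K) $$ (i,j) = P $$ (i,j) + (\<Sum>l<m. (Z - D) $$ (i,l) * K $$ (l,j))"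
            by (rule ent[OF Z' ij])
          also have "(\<Sum>l<m. (Z - D) $$ (i,l) * K $$ (l,j)) =
              (\<Sum>l<m. Z $$ (i,l) * K $$ (l,j) - (if c = l then q i else 0) * K $$ (l,j))"
            by (rule sum.cong) (auto simp: D_def Z ij left_diff_distrib)
          also have "\<dots> = (\<Sum>l<m. Z $$ (i,l) * K $$ (l,j)) - q i * K $$ (c,j)"
            by (simp add: sum_subtractf sum_delta_mult[OF c])
          finally show ?thesis using ent[OF Z ij] by simp
        qed
        have "\<forall>i<r. \<forall>j<Suc c. 0 \<le> (P + (Z - D) * K) $$ (i,j) \<and> (P + (Z - D) * K) $$ (i,j) < K $$ (j,j)"
        proof (intro allI impI)
          fix i j assume i: "i < r" and j: "j < Suc c"
          show "0 \<le> (P + (Z - D) * K) $$ (i,j) \<and> (P + (Z - D) * K) $$ (i,j) < K $$ (j,j)"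
          proof (cases "j < c")
            case True
            then show ?thesis using new[OF i] IH i Kz[of j c] c by simp
          next
            case False
            then have jc: "j = c" using j by auto
            have "(P + (Z - D) * K) $$ (i,j) = (P + Z * K) $$ (i,c) mod K $$ (c,c)"
              using new[OF i] jc c by (simp add: q_def minus_div_mult_eq_mod)
            then show ?thesis using Kp[OF c] jc by simp
          qed
        qed
        then show "\<exists>Z. Z \<in> carrier_mat r m \<and>
          (\<forall>i<r. \<forall>j<Suc c. 0 \<le> (P + Z * K) $$ (i,j) \<and> (P + Z * K) $$ (i,j) < K $$ (j,j))"
          using Z' by blast
      qed
    qed
  qed
  from this[rule_format, of m] obtain Z where "Z \<in> carrier_mat r m"
    "\<forall>i<r. \<forall>j<m. 0 \<le> (P + Z * K) $$ (i,j) \<and> (P + Z * K) $$ (i,j) < K $$ (j,j)" by auto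
  then show ?thesis unfolding red_def using P K by (intro exI[of _ Z]) auto
qed

lemma hermite_one: "is_hermite (1\<^sub>m n)"
  unfolding is_hermite_def by auto

lemma hermite_diag_pos: "is_hermite D \<Longrightarrow> j < dim_row D \<Longrightarrow> D $$ (j,j) > 0"
  unfolding is_hermite_def by auto

lemma red_zero: "is_hermite D \<Longrightarrow> D \<in> carrier_mat c c \<Longrightarrow> red (0\<^sub>m r c) D"
  unfolding red_def is_hermite_def by auto

lemma hermite_four_block:
  assumes A: "A \<in> carrier_mat n1 n1" and D: "D \<in> carrier_mat n2 n2" and B: "B \<in> carrier_mat n1 n2"
    and HA: "is_hermite A" and HD: "is_hermite D" and R: "red B D"
  shows "is_hermite (four_block_mat A B (0\<^sub>m n2 n1) D)"
proof -
  have Az: "\<And>i j. j < i \<Longrightarrow> i < n1 \<Longrightarrow> A $$ (i,j) = 0" and Ap: "\<And>j. j < n1 \<Longrightarrow> A $$ (j,j) > 0"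
    and Ar: "\<And>i j. i < j \<Longrightarrow> j < n1 \<Longrightarrow> 0 \<le> A $$ (i,j) \<and> A $$ (i,j) < A $$ (j,j)"
    using HA A unfolding is_hermite_def by auto
  have Dz: "\<And>i j. j < i \<Longrightarrow> i < n2 \<Longrightarrow> D $$ (i,j) = 0" and Dp: "\<And>j. j < n2 \<Longrightarrow> D $$ (j,j) > 0"
    and Dr: "\<And>i j. i < j \<Longrightarrow> j < n2 \<Longrightarrow> 0 \<le> D $$ (i,j) \<and> D $$ (i,j) < D $$ (j,j)"
    using HD D unfolding is_hermite_def by auto
  have Br: "\<And>i j. i < n1 \<Longrightarrow> j < n2 \<Longrightarrow> 0 \<le> B $$ (i,j) \<and> B $$ (i,j) < D $$ (j,j)"
    using R B unfolding red_def by auto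
  let ?M = "four_block_mat A B (0\<^sub>m n2 n1) D"
  show ?thesis unfolding is_hermite_def
  proof (intro conjI allI impI)
    show "square_mat ?M" using A D by simp
  next
    fix i j assume ij: "j < i \<and> i < dim_row ?M"
    then show "?M $$ (i,j) = 0" using A D Az[of j i] Dz[of "j - n1" "i - n1"] by auto
  next
    fix j assume "j < dim_row ?M"
    then show "?M $$ (j,j) > 0" using A D Ap[of j] Dp[of "j - n1"] by auto
  next
    fix i j assume ij: "i < j \<and> j < dim_row ?M"
    then show "0 \<le> ?M $$ (i,j)"
      using A D Ar[of i j] Dr[of "i - n1" "j - n1"] Br[of i "j - n1"] by auto
  next
    fix i j assume ij: "i < j \<and> j < dim_row ?M"
    then show "?M $$ (i,j) < ?M $$ (j,j)"
      using A D Ar[of i j] Dr[of "i - n1" "j - n1"] Br[of i "j - n1"] by auto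
  qed
qed

lemma red_four_block:
  assumes "B1 \<in> carrier_mat r1 c1" "B2 \<in> carrier_mat r1 c2" "B3 \<in> carrier_mat r2 c1" "B4 \<in> carrier_mat r2 c2"
    "D1 \<in> carrier_mat c1 c1" "D4 \<in> carrier_mat c2 c2"
    "red B1 D1" "red B2 D4" "red B3 D1" "red B4 D4"
  shows "red (four_block_mat B1 B2 B3 B4) (four_block_mat D1 D2 D3 D4)"
  using assms unfolding red_def by auto



lemma add4: "a \<in> carrier_mat n m \<Longrightarrow> b \<in> carrier_mat n m \<Longrightarrow> c \<in> carrier_mat n m \<Longrightarrow> d \<in> carrier_mat n m
  \<Longrightarrow> (a + b) + (c + d) = a + b + c + (d :: 'a :: comm_ring_1 mat)"
  by simp

lemma blk4_mult:
  fixes A11 :: "'a :: comm_ring_1 mat"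
  assumes aA: "A11 \<in> carrier_mat d1 d1" "A12 \<in> carrier_mat d1 d2" "A13 \<in> carrier_mat d1 d3" "A14 \<in> carrier_mat d1 d4" "A21 \<in> carrier_mat d2 d1" "A22 \<in> carrier_mat d2 d2" "A23 \<in> carrier_mat d2 d3" "A24 \<in> carrier_mat d2 d4" "A31 \<in> carrier_mat d3 d1" "A32 \<in> carrier_mat d3 d2" "A33 \<in> carrier_mat d3 d3" "A34 \<in> carrier_mat d3 d4" "A41 \<in> carrier_mat d4 d1" "A42 \<in> carrier_mat d4 d2" "A43 \<in> carrier_mat d4 d3" "A44 \<in> carrier_mat d4 d4"
  and aB: "B11 \<in> carrier_mat d1 d1" "B12 \<in> carrier_mat d1 d2" "B13 \<in> carrier_mat d1 d3" "B14 \<in> carrier_mat d1 d4" "B21 \<in> carrier_mat d2 d1" "B22 \<in> carrier_mat d2 d2" "B23 \<in> carrier_mat d2 d3" "B24 \<in> carrier_mat d2 d4" "B31 \<in> carrier_mat d3 d1" "B32 \<in> carrier_mat d3 d2" "B33 \<in> carrier_mat d3 d3" "B34 \<in> carrier_mat d3 d4" "B41 \<in> carrier_mat d4 d1" "B42 \<in> carrier_mat d4 d2" "B43 \<in> carrier_mat d4 d3" "B44 \<in> carrier_mat d4 d4"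
  shows "blk4 A11 A12 A13 A14 A21 A22 A23 A24 A31 A32 A33 A34 A41 A42 A43 A44 * blk4 B11 B12 B13 B14 B21 B22 B23 B24 B31 B32 B33 B34 B41 B42 B43 B44 = blk4 (A11 * B11 + A12 * B21 + A13 * B31 + A14 * B41) (A11 * B12 + A12 * B22 + A13 * B32 + A14 * B42) (A11 * B13 + A12 * B23 + A13 * B33 + A14 * B43) (A11 * B14 + A12 * B24 + A13 * B34 + A14 * B44) (A21 * B11 + A22 * B21 + A23 * B31 + A24 * B41) (A21 * B12 + A22 * B22 + A23 * B32 + A24 * B42) (A21 * B13 + A22 * B23 + A23 * B33 + A24 * B43) (A21 * B14 + A22 * B24 + A23 * B34 + A24 * B44) (A31 * B11 + A32 * B21 + A33 * B31 + A34 * B41) (A31 * B12 + A32 * B22 + A33 * B32 + A34 * B42) (A31 * B13 + A32 * B23 + A33 * B33 + A34 * B43) (A31 * B14 + A32 * B24 + A33 * B34 + A34 * B44) (A41 * B11 + A42 * B21 + A43 * B31 + A44 * B41) (A41 * B12 + A42 * B22 + A43 * B32 + A44 * B42) (A41 * B13 + A42 * B23 + A43 * B33 + A44 * B43) (A41 * B14 + A42 * B24 + A43 * B34 + A44 * B44)"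
proof -
  have o: "blk4 A11 A12 A13 A14 A21 A22 A23 A24 A31 A32 A33 A34 A41 A42 A43 A44 * blk4 B11 B12 B13 B14 B21 B22 B23 B24 B31 B32 B33 B34 B41 B42 B43 B44 = four_block_mat
     ((four_block_mat A11 A12 A21 A22) * (four_block_mat B11 B12 B21 B22) + (four_block_mat A13 A14 A23 A24) * (four_block_mat B31 B32 B41 B42))
     ((four_block_mat A11 A12 A21 A22) * (four_block_mat B13 B14 B23 B24) + (four_block_mat A13 A14 A23 A24) * (four_block_mat B33 B34 B43 B44))
     ((four_block_mat A31 A32 A41 A42) * (four_block_mat B11 B12 B21 B22) + (four_block_mat A33 A34 A43 A44) * (four_block_mat B31 B32 B41 B42))
     ((four_block_mat A31 A32 A41 A42) * (four_block_mat B13 B14 B23 B24) + (four_block_mat A33 A34 A43 A44) * (four_block_mat B33 B34 B43 B44))"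
    unfolding blk4_def by (rule mult_four_block_mat[of _ "d1+d2" "d1+d2" _ "d3+d4" _ "d3+d4" _ _ "d1+d2" _ "d3+d4"]) (intro four_block_carrier_mat aA aB)+
  have p000: "(four_block_mat A11 A12 A21 A22) * (four_block_mat B11 B12 B21 B22) = (four_block_mat (A11 * B11 + A12 * B21) (A11 * B12 + A12 * B22) (A21 * B11 + A22 * B21) (A21 * B12 + A22 * B22))"
    by (rule mult_four_block_mat[of _ d1 d1 _ d2 _ d2 _ _ d1 _ d2]) (intro aA aB)+
  have p010: "(four_block_mat A13 A14 A23 A24) * (four_block_mat B31 B32 B41 B42) = (four_block_mat (A13 * B31 + A14 * B41) (A13 * B32 + A14 * B42) (A23 * B31 + A24 * B41) (A23 * B32 + A24 * B42))"
    by (rule mult_four_block_mat[of _ d1 d3 _ d4 _ d2 _ _ d1 _ d2]) (intro aA aB)+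
  have s00: "(four_block_mat A11 A12 A21 A22) * (four_block_mat B11 B12 B21 B22) + (four_block_mat A13 A14 A23 A24) * (four_block_mat B31 B32 B41 B42) = four_block_mat ((A11 * B11 + A12 * B21) + (A13 * B31 + A14 * B41)) ((A11 * B12 + A12 * B22) + (A13 * B32 + A14 * B42)) ((A21 * B11 + A22 * B21) + (A23 * B31 + A24 * B41)) ((A21 * B12 + A22 * B22) + (A23 * B32 + A24 * B42))"
    unfolding p000 p010
    by (rule add_four_block_mat[OF add_carrier_mat[OF mult_carrier_mat[OF aA(2) aB(5)]] add_carrier_mat[OF mult_carrier_mat[OF aA(2) aB(6)]] add_carrier_mat[OF mult_carrier_mat[OF aA(6) aB(5)]] add_carrier_mat[OF mult_carrier_mat[OF aA(6) aB(6)]] add_carrier_mat[OF mult_carrier_mat[OF aA(4) aB(13)]] add_carrier_mat[OF mult_carrier_mat[OF aA(4) aB(14)]] add_carrier_mat[OF mult_carrier_mat[OF aA(8) aB(13)]] add_carrier_mat[OF mult_carrier_mat[OF aA(8) aB(14)]]])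
  have p001: "(four_block_mat A11 A12 A21 A22) * (four_block_mat B13 B14 B23 B24) = (four_block_mat (A11 * B13 + A12 * B23) (A11 * B14 + A12 * B24) (A21 * B13 + A22 * B23) (A21 * B14 + A22 * B24))"
    by (rule mult_four_block_mat[of _ d1 d1 _ d2 _ d2 _ _ d3 _ d4]) (intro aA aB)+
  have p011: "(four_block_mat A13 A14 A23 A24) * (four_block_mat B33 B34 B43 B44) = (four_block_mat (A13 * B33 + A14 * B43) (A13 * B34 + A14 * B44) (A23 * B33 + A24 * B43) (A23 * B34 + A24 * B44))"
    by (rule mult_four_block_mat[of _ d1 d3 _ d4 _ d2 _ _ d3 _ d4]) (intro aA aB)+
  have s01: "(four_block_mat A11 A12 A21 A22) * (four_block_mat B13 B14 B23 B24) + (four_block_mat A13 A14 A23 A24) * (four_block_mat B33 B34 B43 B44) = four_block_mat ((A11 * B13 + A12 * B23) + (A13 * B33 + A14 * B43)) ((A11 * B14 + A12 * B24) + (A13 * B34 + A14 * B44)) ((A21 * B13 + A22 * B23) + (A23 * B33 + A24 * B43)) ((A21 * B14 + A22 * B24) + (A23 * B34 + A24 * B44))"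
    unfolding p001 p011
    by (rule add_four_block_mat[OF add_carrier_mat[OF mult_carrier_mat[OF aA(2) aB(7)]] add_carrier_mat[OF mult_carrier_mat[OF aA(2) aB(8)]] add_carrier_mat[OF mult_carrier_mat[OF aA(6) aB(7)]] add_carrier_mat[OF mult_carrier_mat[OF aA(6) aB(8)]] add_carrier_mat[OF mult_carrier_mat[OF aA(4) aB(15)]] add_carrier_mat[OF mult_carrier_mat[OF aA(4) aB(16)]] add_carrier_mat[OF mult_carrier_mat[OF aA(8) aB(15)]] add_carrier_mat[OF mult_carrier_mat[OF aA(8) aB(16)]]])
  have p100: "(four_block_mat A31 A32 A41 A42) * (four_block_mat B11 B12 B21 B22) = (four_block_mat (A31 * B11 + A32 * B21) (A31 * B12 + A32 * B22) (A41 * B11 + A42 * B21) (A41 * B12 + A42 * B22))"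
    by (rule mult_four_block_mat[of _ d3 d1 _ d2 _ d4 _ _ d1 _ d2]) (intro aA aB)+
  have p110: "(four_block_mat A33 A34 A43 A44) * (four_block_mat B31 B32 B41 B42) = (four_block_mat (A33 * B31 + A34 * B41) (A33 * B32 + A34 * B42) (A43 * B31 + A44 * B41) (A43 * B32 + A44 * B42))"
    by (rule mult_four_block_mat[of _ d3 d3 _ d4 _ d4 _ _ d1 _ d2]) (intro aA aB)+
  have s10: "(four_block_mat A31 A32 A41 A42) * (four_block_mat B11 B12 B21 B22) + (four_block_mat A33 A34 A43 A44) * (four_block_mat B31 B32 B41 B42) = four_block_mat ((A31 * B11 + A32 * B21) + (A33 * B31 + A34 * B41)) ((A31 * B12 + A32 * B22) + (A33 * B32 + A34 * B42)) ((A41 * B11 + A42 * B21) + (A43 * B31 + A44 * B41)) ((A41 * B12 + A42 * B22) + (A43 * B32 + A44 * B42))"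
    unfolding p100 p110
    by (rule add_four_block_mat[OF add_carrier_mat[OF mult_carrier_mat[OF aA(10) aB(5)]] add_carrier_mat[OF mult_carrier_mat[OF aA(10) aB(6)]] add_carrier_mat[OF mult_carrier_mat[OF aA(14) aB(5)]] add_carrier_mat[OF mult_carrier_mat[OF aA(14) aB(6)]] add_carrier_mat[OF mult_carrier_mat[OF aA(12) aB(13)]] add_carrier_mat[OF mult_carrier_mat[OF aA(12) aB(14)]] add_carrier_mat[OF mult_carrier_mat[OF aA(16) aB(13)]] add_carrier_mat[OF mult_carrier_mat[OF aA(16) aB(14)]]])
  have p101: "(four_block_mat A31 A32 A41 A42) * (four_block_mat B13 B14 B23 B24) = (four_block_mat (A31 * B13 + A32 * B23) (A31 * B14 + A32 * B24) (A41 * B13 + A42 * B23) (A41 * B14 + A42 * B24))"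
    by (rule mult_four_block_mat[of _ d3 d1 _ d2 _ d4 _ _ d3 _ d4]) (intro aA aB)+
  have p111: "(four_block_mat A33 A34 A43 A44) * (four_block_mat B33 B34 B43 B44) = (four_block_mat (A33 * B33 + A34 * B43) (A33 * B34 + A34 * B44) (A43 * B33 + A44 * B43) (A43 * B34 + A44 * B44))"
    by (rule mult_four_block_mat[of _ d3 d3 _ d4 _ d4 _ _ d3 _ d4]) (intro aA aB)+
  have s11: "(four_block_mat A31 A32 A41 A42) * (four_block_mat B13 B14 B23 B24) + (four_block_mat A33 A34 A43 A44) * (four_block_mat B33 B34 B43 B44) = four_block_mat ((A31 * B13 + A32 * B23) + (A33 * B33 + A34 * B43)) ((A31 * B14 + A32 * B24) + (A33 * B34 + A34 * B44)) ((A41 * B13 + A42 * B23) + (A43 * B33 + A44 * B43)) ((A41 * B14 + A42 * B24) + (A43 * B34 + A44 * B44))"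
    unfolding p101 p111
    by (rule add_four_block_mat[OF add_carrier_mat[OF mult_carrier_mat[OF aA(10) aB(7)]] add_carrier_mat[OF mult_carrier_mat[OF aA(10) aB(8)]] add_carrier_mat[OF mult_carrier_mat[OF aA(14) aB(7)]] add_carrier_mat[OF mult_carrier_mat[OF aA(14) aB(8)]] add_carrier_mat[OF mult_carrier_mat[OF aA(12) aB(15)]] add_carrier_mat[OF mult_carrier_mat[OF aA(12) aB(16)]] add_carrier_mat[OF mult_carrier_mat[OF aA(16) aB(15)]] add_carrier_mat[OF mult_carrier_mat[OF aA(16) aB(16)]]])
  show ?thesis unfolding o s00 s01 s10 s11 unfolding blk4_def
    by (simp only: add4[OF mult_carrier_mat[OF aA(1) aB(1)] mult_carrier_mat[OF aA(2) aB(5)] mult_carrier_mat[OF aA(3) aB(9)] mult_carrier_mat[OF aA(4) aB(13)]] add4[OF mult_carrier_mat[OF aA(1) aB(2)] mult_carrier_mat[OF aA(2) aB(6)] mult_carrier_mat[OF aA(3) aB(10)] mult_carrier_mat[OF aA(4) aB(14)]] add4[OF mult_carrier_mat[OF aA(1) aB(3)] mult_carrier_mat[OF aA(2) aB(7)] mult_carrier_mat[OF aA(3) aB(11)] mult_carrier_mat[OF aA(4) aB(15)]] add4[OF mult_carrier_mat[OF aA(1) aB(4)] mult_carrier_mat[OF aA(2) aB(8)] mult_carrier_mat[OF aA(3) aB(12)] mult_carrier_mat[OF aA(4) aB(16)]] add4[OF mult_carrier_mat[OF aA(5) aB(1)] mult_carrier_mat[OF aA(6) aB(5)] mult_carrier_mat[OF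 aA(7) aB(9)] mult_carrier_mat[OF aA(8) aB(13)]] add4[OF mult_carrier_mat[OF aA(5) aB(2)] mult_carrier_mat[OF aA(6) aB(6)] mult_carrier_mat[OF aA(7) aB(10)] mult_carrier_mat[OF aA(8) aB(14)]] add4[OF mult_carrier_mat[OF aA(5) aB(3)] mult_carrier_mat[OF aA(6) aB(7)] mult_carrier_mat[OF aA(7) aB(11)] mult_carrier_mat[OF aA(8) aB(15)]] add4[OF mult_carrier_mat[OF aA(5) aB(4)] mult_carrier_mat[OF aA(6) aB(8)] mult_carrier_mat[OF aA(7) aB(12)] mult_carrier_mat[OF aA(8) aB(16)]] add4[OF mult_carrier_mat[OF aA(9) aB(1)] mult_carrier_mat[OF aA(10) aB(5)] mult_carrier_mat[OF aA(11) aB(9)] mult_carrier_mat[OF aA(12) aB(13)]] add4[OF mult_carrier_mat[OF aA(9) aB(2)] mult_carrier_mat[OF aA(10) aB(6)] mult_carrier_mat[OF aA(11) aB(10)] mult_carrier_mat[OF aA(12) aB(14)]] add4[OF mult_carrier_mat[OF aA(9) aB(3)] mult_carrier_mat[OF aA(10) aB(7)] mult_carrier_mat[OF aA(11) aB(11)] mult_carrier_mat[OF aA(12) aB(15)]] add4[OF mult_carrier_mat[OF aA(9) aB(4)] mult_carrier_mat[OF aA(10) aB(8)] mult_carrier_mat[OF aA(11) aB(12)] mult_carrier_mat[OF aA(12) aB(16)]] add4[OF mult_carrier_mat[OF aA(13) aB(1)] mult_carrier_mat[OF aA(14) aB(5)] mult_carrier_mat[OF aA(15) aB(9)] mult_carrier_mat[OF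 aA(16) aB(13)]] add4[OF mult_carrier_mat[OF aA(13) aB(2)] mult_carrier_mat[OF aA(14) aB(6)] mult_carrier_mat[OF aA(15) aB(10)] mult_carrier_mat[OF aA(16) aB(14)]] add4[OF mult_carrier_mat[OF aA(13) aB(3)] mult_carrier_mat[OF aA(14) aB(7)] mult_carrier_mat[OF aA(15) aB(11)] mult_carrier_mat[OF aA(16) aB(15)]] add4[OF mult_carrier_mat[OF aA(13) aB(4)] mult_carrier_mat[OF aA(14) aB(8)] mult_carrier_mat[OF aA(15) aB(12)] mult_carrier_mat[OF aA(16) aB(16)]])
qed


lemma prod_list_pos: "(\<forall>x\<in>set xs. (x::'a::linordered_idom) > 0) \<Longrightarrow> prod_list xs > 0"
  by (induct xs) auto

lemma lattice_factor:
  assumes T: "T \<in> carrier_mat m m" and B: "B \<in> carrier_mat r m"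
    and rows: "\<forall>i<r. row B i \<in> int_lattice T"
  shows "\<exists>P. P \<in> carrier_mat r m \<and> B = P * T"
proof -
  have "\<forall>i<r. \<exists>c. c \<in> carrier_vec m \<and> row B i = transpose_mat T *\<^sub>v c"
    using rows T unfolding int_lattice_def by auto
  then obtain cs where cs: "\<And>i. i < r \<Longrightarrow> cs i \<in> carrier_vec m \<and> row B i = transpose_mat T *\<^sub>v cs i"
    by metis
  define P where "P = mat r m (\<lambda>(i,j). cs i $ j)"
  have P: "P \<in> carrier_mat r m" unfolding P_def by auto
  have "B = P * T"
  proof (rule eq_matI)
    fix i j assume i: "i < dim_row (P * T)" and j: "j < dim_col (P * T)"
    then have i: "i < r" and j: "j < m" using P T by auto
    have "B $$ (i,j) = row B i $ j" using B i j by auto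
    also have "\<dots> = (transpose_mat T *\<^sub>v cs i) $ j" using cs[OF i] by simp
    also have "\<dots> = (\<Sum>k<m. T $$ (k,j) * cs i $ k)"
      using cs[OF i] T j by (auto simp: scalar_prod_def lessThan_atLeast0 intro!: sum.cong)
    also have "\<dots> = (\<Sum>k<m. P $$ (i,k) * T $$ (k,j))"
      by (rule sum.cong) (auto simp: P_def i mult.commute)
    also have "\<dots> = (P * T) $$ (i,j)" using mult_entry[OF P T i j] by simp
    finally show "B $$ (i,j) = (P * T) $$ (i,j)" .
  qed (insert P T B, auto)
  then show ?thesis using P by blast
qed

lemma hermite_det_pos:
  assumes T: "T \<in> carrier_mat m m" and H: "is_hermite T"
  shows "det T > 0"
proof -
  have ut: "upper_triangular T" using H T unfolding is_hermite_def upper_triangular_def by auto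
  have "det T = prod_list (diag_mat T)" by (rule det_upper_triangular[OF ut T])
  moreover have "\<forall>x\<in>set (diag_mat T). x > 0" using H T unfolding is_hermite_def diag_mat_def by auto
  ultimately show ?thesis by (simp add: prod_list_pos)
qed

lemma smith_det_pos:
  assumes S: "S \<in> carrier_mat m m" and H: "nonsingular_smith S"
  shows "det S > 0"
proof -
  have ut: "upper_triangular S" using H S unfolding nonsingular_smith_def upper_triangular_def by auto
  have "det S = prod_list (diag_mat S)" by (rule det_upper_triangular[OF ut S])
  moreover have "\<forall>x\<in>set (diag_mat S). x > 0" using H S unfolding nonsingular_smith_def diag_mat_def by auto
  ultimately show ?thesis by (simp add: prod_list_pos)
qed

lemma unimod_uminus:
  fixes W :: "int mat" assumes W: "W \<in> carrier_mat n n" "invertible_mat W"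
  shows "invertible_mat (- W)"
proof -
  have "- W = (-1) \<cdot>\<^sub>m W" using W by (intro eq_matI) auto
  then have "det (- W) = (-1) ^ n * det W" using W by simp
  then show ?thesis using W unimod_iff[of W n] unimod_iff[of "- W" n] by (simp add: abs_mult)
qed


lemma blk4_cong: "A11 = B11 \<Longrightarrow> A12 = B12 \<Longrightarrow> A13 = B13 \<Longrightarrow> A14 = B14 \<Longrightarrow>
  A21 = B21 \<Longrightarrow> A22 = B22 \<Longrightarrow> A23 = B23 \<Longrightarrow> A24 = B24 \<Longrightarrow>
  A31 = B31 \<Longrightarrow> A32 = B32 \<Longrightarrow> A33 = B33 \<Longrightarrow> A34 = B34 \<Longrightarrow>
  A41 = B41 \<Longrightarrow> A42 = B42 \<Longrightarrow> A43 = B43 \<Longrightarrow> A44 = B44 \<Longrightarrow>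
  blk4 A11 A12 A13 A14 A21 A22 A23 A24 A31 A32 A33 A34 A41 A42 A43 A44 =
  blk4 B11 B12 B13 B14 B21 B22 B23 B24 B31 B32 B33 B34 B41 B42 B43 B44"
  by simp



lemma aux1: "X \<in> carrier_mat n k \<Longrightarrow> Y \<in> carrier_mat n k \<Longrightarrow> V \<in> carrier_mat n k \<Longrightarrow>
  X + (Y + V) + 0\<^sub>m n k + - V = X + (Y :: int mat)"
  by (intro eq_matI) auto

lemma aux2: "A \<in> carrier_mat n k \<Longrightarrow> V \<in> carrier_mat n k \<Longrightarrow>
  0\<^sub>m n k + (- A + V) + A + - V = (0\<^sub>m n k :: int mat)"
  by (intro eq_matI) auto

lemma aux3: "V \<in> carrier_mat n k \<Longrightarrow> 0\<^sub>m n k + V + 0\<^sub>m n k + - V = (0\<^sub>m n k :: int mat)"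
  by (intro eq_matI) auto

theorem mainTheorem13:
  fixes S T A F :: "int mat" and m a f :: nat
  assumes S: "S \<in> carrier_mat m m" and Ssm: "nonsingular_smith S"
    and T: "T \<in> carrier_mat m m" and Th: "is_hermite T"
    and A: "A \<in> carrier_mat a m" and F: "F \<in> carrier_mat f m"
    and Srows: "\<forall>i < m. row S i \<in> int_lattice T"
    and Arows: "\<forall>i < a. row A i \<in> int_lattice T"
  defines "M \<equiv> blk4 (1\<^sub>m f) F (0\<^sub>m f a) (0\<^sub>m f m)
                    (0\<^sub>m m f) T (0\<^sub>m m a) (1\<^sub>m m)
                    (0\<^sub>m a f) A (1\<^sub>m a) (0\<^sub>m a m)
                    (0\<^sub>m m f) S (0\<^sub>m m a) (0\<^sub>m m m)"
  shows "\<exists>G Q X C K.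
     G \<in> carrier_mat f m \<and> Q \<in> carrier_mat f m \<and> X \<in> carrier_mat m m \<and>
     C \<in> carrier_mat a m \<and> K \<in> carrier_mat m m \<and>
     hermite_form_of
       (blk4 (1\<^sub>m f) G (0\<^sub>m f a) Q
             (0\<^sub>m m f) T (0\<^sub>m m a) X
             (0\<^sub>m a f) (0\<^sub>m a m) (1\<^sub>m a) C
             (0\<^sub>m m f) (0\<^sub>m m m) (0\<^sub>m m a) K) M \<and>
     (\<exists>N. N \<in> carrier_mat (a + m) (a + m) \<and>
        map_mat rat_of_int N =
          blk2 (1\<^sub>m a) (- (map_mat rat_of_int A * rat_inv T))
               (0\<^sub>m m a) (- (map_mat rat_of_int S * rat_inv T)) \<and>
        hermite_form_of (blk2 (1\<^sub>m a) C (0\<^sub>m m a) K) N) \<and>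
     (\<exists>Y2 Y3 Y4 Ubar.
        Y2 \<in> carrier_mat f m \<and> Y3 \<in> carrier_mat a m \<and> Y4 \<in> carrier_mat m m \<and>
        Ubar = blk4 (1\<^sub>m f) Q (0\<^sub>m f a) Y2
                    (0\<^sub>m m f) (1\<^sub>m m) (0\<^sub>m m a) (0\<^sub>m m m)
                    (0\<^sub>m a f) C (1\<^sub>m a) Y3
                    (0\<^sub>m m f) K (0\<^sub>m m a) Y4 \<and>
        unimodular Ubar \<and>
        Ubar * M = blk4 (1\<^sub>m f) G (0\<^sub>m f a) Q
                        (0\<^sub>m m f) T (0\<^sub>m m a) (1\<^sub>m m)
                        (0\<^sub>m a f) (0\<^sub>m a m) (1\<^sub>m a) C
                        (0\<^sub>m m f) (0\<^sub>m m m) (0\<^sub>m m a) K)"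
proof -
  have ST: "\<exists>P. P \<in> carrier_mat m m \<and> S = P * T" by (rule lattice_factor[OF T S Srows])
  then obtain PS where PS: "PS \<in> carrier_mat m m" and SPT: "S = PS * T" by blast
  have "\<exists>P. P \<in> carrier_mat a m \<and> A = P * T" by (rule lattice_factor[OF T A Arows])
  then obtain PA where PA: "PA \<in> carrier_mat a m" and APT: "A = PA * T" by blast
  have dS: "det S \<noteq> 0" using smith_det_pos[OF S Ssm] by simp
  have "det S = det PS * det T" unfolding SPT by (rule det_mult[OF PS T])
  then have dPS: "det PS \<noteq> 0" using dS by auto
  obtain W0 where W0: "W0 \<in> carrier_mat m m" and W0i: "invertible_mat W0" and KH: "is_hermite (W0 * PS)"
    using hnf_exists[OF PS dPS] by blast
  define K where "K = W0 * PS"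
  have K: "K \<in> carrier_mat m m" unfolding K_def using W0 PS by auto
  have KH: "is_hermite K" using KH unfolding K_def .
  have TH: "is_hermite T" by (rule Th)
  obtain Z where Z: "Z \<in> carrier_mat a m" and redC: "red (- PA + Z * K) K"
    using reduce_exists[OF K KH, of "- PA" a] PA by auto
  define C where "C = - PA + Z * K"
  obtain Q0 where Q0: "Q0 \<in> carrier_mat f m" and redG: "red (F + Q0 * T) T"
    using reduce_exists[OF T TH F] by auto
  define G where "G = F + Q0 * T"
  obtain Z1 where Z1: "Z1 \<in> carrier_mat f m" and redQ: "red (Q0 + Z1 * K) K"
    using reduce_exists[OF K KH Q0] by auto
  define Q where "Q = Q0 + Z1 * K"
  obtain Z2 where Z2: "Z2 \<in> carrier_mat m m" and redX: "red (1\<^sub>m m + Z2 * K) K"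
    using reduce_exists[OF K KH, of "1\<^sub>m m" m] by auto
  define X where "X = 1\<^sub>m m + Z2 * K"
  define Y2 where "Y2 = - (Z1 * W0)"
  define Y3 where "Y3 = - (Z * W0)"
  define Y4 where "Y4 = - W0"
  have C: "C \<in> carrier_mat a m" unfolding C_def using PA Z K by auto
  have G: "G \<in> carrier_mat f m" unfolding G_def using F Q0 T by auto
  have Q: "Q \<in> carrier_mat f m" unfolding Q_def using Q0 Z1 K by auto
  have X: "X \<in> carrier_mat m m" unfolding X_def using Z2 K by auto
  have Y2: "Y2 \<in> carrier_mat f m" unfolding Y2_def using Z1 W0 by auto
  have Y3: "Y3 \<in> carrier_mat a m" unfolding Y3_def using Z W0 by auto
  have Y4: "Y4 \<in> carrier_mat m m" unfolding Y4_def using W0 by auto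
  define Ubar where "Ubar = blk4 (1\<^sub>m f) Q (0\<^sub>m f a) Y2
                    (0\<^sub>m m f) (1\<^sub>m m) (0\<^sub>m m a) (0\<^sub>m m m)
                    (0\<^sub>m a f) C (1\<^sub>m a) Y3
                    (0\<^sub>m m f) K (0\<^sub>m m a) Y4"
  define H' where "H' = blk4 (1\<^sub>m f) G (0\<^sub>m f a) Q
                        (0\<^sub>m m f) T (0\<^sub>m m a) (1\<^sub>m m)
                        (0\<^sub>m a f) (0\<^sub>m a m) (1\<^sub>m a) C
                        (0\<^sub>m m f) (0\<^sub>m m m) (0\<^sub>m m a) K"
  define H where "H = blk4 (1\<^sub>m f) G (0\<^sub>m f a) Q
             (0\<^sub>m m f) T (0\<^sub>m m a) X
             (0\<^sub>m a f) (0\<^sub>m a m) (1\<^sub>m a) C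
             (0\<^sub>m m f) (0\<^sub>m m m) (0\<^sub>m m a) K"
  define D2 where "D2 = blk4 (1\<^sub>m f) (0\<^sub>m f m) (0\<^sub>m f a) (0\<^sub>m f m)
                    (0\<^sub>m m f) (1\<^sub>m m) (0\<^sub>m m a) Z2
                    (0\<^sub>m a f) (0\<^sub>m a m) (1\<^sub>m a) (0\<^sub>m a m)
                    (0\<^sub>m m f) (0\<^sub>m m m) (0\<^sub>m m a) (1\<^sub>m m)"
  have KT: "K * T = W0 * S" unfolding K_def SPT using W0 PS T by simp
  have QT: "Q * T = Q0 * T + (Z1 * W0) * S"
  proof -
    have "Q * T = Q0 * T + (Z1 * K) * T" unfolding Q_def using Q0 Z1 K T by (simp add: add_mult_distrib_mat)
    also have "(Z1 * K) * T = (Z1 * W0) * S" using Z1 K T W0 S KT by simp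
    finally show ?thesis .
  qed
  have CT: "C * T = - A + (Z * W0) * S"
  proof -
    have "C * T = - PA * T + (Z * K) * T" unfolding C_def using PA Z K T by (simp add: add_mult_distrib_mat)
    also have "(Z * K) * T = (Z * W0) * S" using Z K T W0 S KT by simp
    also have "- PA * T = - A" unfolding APT using PA T by simp
    finally show ?thesis .
  qed
  define V1 where "V1 = (Z1 * W0) * S"
  define V3 where "V3 = (Z * W0) * S"
  define V4 where "V4 = W0 * S"
  have V1: "V1 \<in> carrier_mat f m" unfolding V1_def using Z1 W0 S by auto
  have V3: "V3 \<in> carrier_mat a m" unfolding V3_def using Z W0 S by auto
  have V4: "V4 \<in> carrier_mat m m" unfolding V4_def using W0 S by auto
  have Q0T: "Q0 * T \<in> carrier_mat f m" using Q0 T by auto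
  have e12: "1\<^sub>m f * F + Q * T + 0\<^sub>m f a * A + Y2 * S = G"
  proof -
    have a1: "1\<^sub>m f * F = F" using F by simp
    have a2: "0\<^sub>m f a * A = 0\<^sub>m f m" using A by simp
    have a3: "Y2 * S = - V1" unfolding Y2_def V1_def using Z1 W0 S by simp
    have "1\<^sub>m f * F + Q * T + 0\<^sub>m f a * A + Y2 * S = F + (Q0 * T + V1) + 0\<^sub>m f m + - V1"
      unfolding a1 a2 a3 QT V1_def ..
    also have "\<dots> = G" unfolding G_def by (rule aux1[OF F Q0T V1])
    finally show ?thesis .
  qed
  have e32: "0\<^sub>m a f * F + C * T + 1\<^sub>m a * A + Y3 * S = 0\<^sub>m a m"
  proof -
    have a1: "1\<^sub>m a * A = A" using A by simp
    have a2: "0\<^sub>m a f * F = 0\<^sub>m a m" using F by simp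
    have a3: "Y3 * S = - V3" unfolding Y3_def V3_def using Z W0 S by simp
    have "0\<^sub>m a f * F + C * T + 1\<^sub>m a * A + Y3 * S = 0\<^sub>m a m + (- A + V3) + A + - V3"
      unfolding a1 a2 a3 CT V3_def ..
    also have "\<dots> = 0\<^sub>m a m" by (rule aux2[OF A V3])
    finally show ?thesis .
  qed
  have e42: "0\<^sub>m m f * F + K * T + 0\<^sub>m m a * A + Y4 * S = 0\<^sub>m m m"
  proof -
    have a1: "0\<^sub>m m a * A = 0\<^sub>m m m" using A by simp
    have a2: "0\<^sub>m m f * F = 0\<^sub>m m m" using F by simp
    have a3: "Y4 * S = - V4" unfolding Y4_def V4_def using W0 S by simp
    have "0\<^sub>m m f * F + K * T + 0\<^sub>m m a * A + Y4 * S = 0\<^sub>m m m + V4 + 0\<^sub>m m m + - V4"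
      unfolding a1 a2 a3 KT V4_def ..
    also have "\<dots> = 0\<^sub>m m m" by (rule aux3[OF V4])
    finally show ?thesis .
  qed
  have UM: "Ubar * M = H'" unfolding Ubar_def M_def H'_def
    apply (subst blk4_mult[OF one_carrier_mat Q zero_carrier_mat Y2 zero_carrier_mat one_carrier_mat zero_carrier_mat zero_carrier_mat zero_carrier_mat C one_carrier_mat Y3 zero_carrier_mat K zero_carrier_mat Y4 one_carrier_mat F zero_carrier_mat zero_carrier_mat zero_carrier_mat T zero_carrier_mat one_carrier_mat zero_carrier_mat A one_carrier_mat zero_carrier_mat zero_carrier_mat S zero_carrier_mat zero_carrier_mat])
    apply (rule blk4_cong)
    using F Q T A C S K G Y2 Y3 Y4 e12 e32 e42 by simp_all
  define E where "E = blk4 (1\<^sub>m f) Q (0\<^sub>m f a) (0\<^sub>m f m)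
                    (0\<^sub>m m f) (1\<^sub>m m) (0\<^sub>m m a) (0\<^sub>m m m)
                    (0\<^sub>m a f) C (1\<^sub>m a) (0\<^sub>m a m)
                    (0\<^sub>m m f) K (0\<^sub>m m a) (1\<^sub>m m)"
  define V where "V = blk4 (1\<^sub>m f) (0\<^sub>m f m) (0\<^sub>m f a) Y2
                    (0\<^sub>m m f) (1\<^sub>m m) (0\<^sub>m m a) (0\<^sub>m m m)
                    (0\<^sub>m a f) (0\<^sub>m a m) (1\<^sub>m a) Y3
                    (0\<^sub>m m f) (0\<^sub>m m m) (0\<^sub>m m a) Y4"
  have EV: "E * V = Ubar" unfolding E_def V_def Ubar_def
    apply (subst blk4_mult[OF one_carrier_mat Q zero_carrier_mat zero_carrier_mat zero_carrier_mat one_carrier_mat zero_carrier_mat zero_carrier_mat zero_carrier_mat C one_carrier_mat zero_carrier_mat zero_carrier_mat K zero_carrier_mat one_carrier_mat one_carrier_mat zero_carrier_mat zero_carrier_mat Y2 zero_carrier_mat one_carrier_mat zero_carrier_mat zero_carrier_mat zero_carrier_mat zero_carrier_mat one_carrier_mat Y3 zero_carrier_mat zero_carrier_mat zero_carrier_mat Y4])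
    apply (rule blk4_cong)
    using Q C K Y2 Y3 Y4 by simp_all
  have Ec: "E \<in> carrier_mat (f + m + (a + m)) (f + m + (a + m))" unfolding E_def blk4_def using Q C K by auto
  have Vc: "V \<in> carrier_mat (f + m + (a + m)) (f + m + (a + m))" unfolding V_def blk4_def using Y2 Y3 Y4 by auto
  have dE: "det E = 1"
  proof -
    have "E = four_block_mat (four_block_mat (1\<^sub>m f) Q (0\<^sub>m m f) (1\<^sub>m m)) (0\<^sub>m (f+m) (a+m))
       (four_block_mat (0\<^sub>m a f) C (0\<^sub>m m f) K) (1\<^sub>m (a+m))" unfolding E_def blk4_def by simp
    also have "det \<dots> = det (four_block_mat (1\<^sub>m f) Q (0\<^sub>m m f) (1\<^sub>m m)) * det (1\<^sub>m (a+m))"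
      by (rule det_four_block_mat_upper_right_zero) (use Q C K in auto)
    also have "det (four_block_mat (1\<^sub>m f) Q (0\<^sub>m m f) (1\<^sub>m m)) = det (1\<^sub>m f) * det (1\<^sub>m m)"
      by (rule det_four_block_mat_lower_left_zero) (use Q in auto)
    finally show ?thesis by simp
  qed
  have Y4i: "invertible_mat Y4" unfolding Y4_def by (rule unimod_uminus[OF W0 W0i])
  have dV: "det V = det Y4"
  proof -
    have "V = four_block_mat (1\<^sub>m (f+m)) (four_block_mat (0\<^sub>m f a) Y2 (0\<^sub>m m a) (0\<^sub>m m m))
       (0\<^sub>m (a+m) (f+m)) (four_block_mat (1\<^sub>m a) Y3 (0\<^sub>m m a) Y4)"
      unfolding V_def blk4_def by (simp del: four_block_one_mat add: four_block_one_mat[symmetric])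
    also have "det \<dots> = det (1\<^sub>m (f+m)) * det (four_block_mat (1\<^sub>m a) Y3 (0\<^sub>m m a) Y4)"
      by (rule det_four_block_mat_lower_left_zero) (use Y2 Y3 Y4 in auto)
    also have "det (four_block_mat (1\<^sub>m a) Y3 (0\<^sub>m m a) Y4) = det (1\<^sub>m a) * det Y4"
      by (rule det_four_block_mat_lower_left_zero) (use Y3 Y4 in auto)
    finally show ?thesis by simp
  qed
  have Ui: "invertible_mat Ubar"
  proof -
    have "det Ubar = det E * det V" unfolding EV[symmetric] by (rule det_mult[OF Ec Vc])
    then have "is_unit (det Ubar)" using dE dV Y4i unimod_iff[OF Y4] by simp
    moreover have "Ubar \<in> carrier_mat (f + m + (a + m)) (f + m + (a + m))" using EV Ec Vc by auto
    ultimately show ?thesis using unimod_iff by blast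
  qed
  have DH: "D2 * H' = H" unfolding D2_def H'_def H_def
    apply (subst blk4_mult[OF one_carrier_mat zero_carrier_mat zero_carrier_mat zero_carrier_mat zero_carrier_mat one_carrier_mat zero_carrier_mat Z2 zero_carrier_mat zero_carrier_mat one_carrier_mat zero_carrier_mat zero_carrier_mat zero_carrier_mat zero_carrier_mat one_carrier_mat one_carrier_mat G zero_carrier_mat Q zero_carrier_mat T zero_carrier_mat one_carrier_mat zero_carrier_mat zero_carrier_mat one_carrier_mat C zero_carrier_mat zero_carrier_mat zero_carrier_mat K])
    apply (rule blk4_cong)
    using G Q T C K Z2 unfolding X_def by simp_all
  have D2c: "D2 \<in> carrier_mat (f + m + (a + m)) (f + m + (a + m))" unfolding D2_def blk4_def using Z2 by auto
  have Di: "invertible_mat D2"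
  proof -
    have "D2 = four_block_mat (1\<^sub>m (f+m)) (four_block_mat (0\<^sub>m f a) (0\<^sub>m f m) (0\<^sub>m m a) Z2)
       (0\<^sub>m (a+m) (f+m)) (1\<^sub>m (a+m))"
      unfolding D2_def blk4_def by simp
    also have "det \<dots> = det (1\<^sub>m (f+m)) * det (1\<^sub>m (a+m))"
      by (rule det_four_block_mat_lower_left_zero) (use Z2 in auto)
    finally have "det D2 = 1" by simp
    then show ?thesis using unimod_iff[OF D2c] by simp
  qed
  have HCK: "is_hermite (four_block_mat (1\<^sub>m a) C (0\<^sub>m m a) K)"
    by (rule hermite_four_block[OF _ K C hermite_one KH]) (use redC in \<open>auto simp: C_def\<close>)
  have HH: "is_hermite H"
  proof -
    have "H = four_block_mat (four_block_mat (1\<^sub>m f) G (0\<^sub>m m f) T) (four_block_mat (0\<^sub>m f a) Q (0\<^sub>m m a) X)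
       (0\<^sub>m (a+m) (f+m)) (four_block_mat (1\<^sub>m a) C (0\<^sub>m m a) K)"
      unfolding H_def blk4_def by simp
    also have "is_hermite \<dots>"
    proof (rule hermite_four_block)
      show "four_block_mat (1\<^sub>m f) G (0\<^sub>m m f) T \<in> carrier_mat (f+m) (f+m)" using T by auto
      show "four_block_mat (1\<^sub>m a) C (0\<^sub>m m a) K \<in> carrier_mat (a+m) (a+m)" using K by auto
      show "four_block_mat (0\<^sub>m f a) Q (0\<^sub>m m a) X \<in> carrier_mat (f+m) (a+m)" using Q X by auto
      show "is_hermite (four_block_mat (1\<^sub>m f) G (0\<^sub>m m f) T)"
        by (rule hermite_four_block[OF _ T G hermite_one TH]) (use redG in \<open>auto simp: G_def\<close>)
      show "is_hermite (four_block_mat (1\<^sub>m a) C (0\<^sub>m m a) K)" by (rule HCK)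
      show "red (four_block_mat (0\<^sub>m f a) Q (0\<^sub>m m a) X) (four_block_mat (1\<^sub>m a) C (0\<^sub>m m a) K)"
        by (rule red_four_block[of _ f a _ m _ _ _ "1\<^sub>m a" K])
          (use Q X K redQ redX in \<open>auto simp: Q_def X_def intro: red_zero[OF hermite_one]\<close>)
    qed
    finally show ?thesis .
  qed
  have Mc: "M \<in> carrier_mat (f + m + (a + m)) (f + m + (a + m))" unfolding M_def blk4_def using F T A S by auto
  have Ubc: "Ubar \<in> carrier_mat (f + m + (a + m)) (f + m + (a + m))" using EV Ec Vc by auto
  have part1: "hermite_form_of H M"
    unfolding hermite_form_of_def
  proof (intro conjI HH exI[of _ "D2 * Ubar"])
    show "D2 * Ubar \<in> carrier_mat (dim_row M) (dim_row M)" using D2c Ubc Mc by auto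
    show "unimodular (D2 * Ubar)" unfolding unimodular_def by (rule unimod_mult[OF D2c Ubc Di Ui])
    show "H = D2 * Ubar * M" using D2c Ubc Mc DH UM by simp
  qed
  have part2: "\<exists>N. N \<in> carrier_mat (a + m) (a + m) \<and>
        map_mat rat_of_int N =
          blk2 (1\<^sub>m a) (- (map_mat rat_of_int A * rat_inv T))
               (0\<^sub>m m a) (- (map_mat rat_of_int S * rat_inv T)) \<and>
        hermite_form_of (blk2 (1\<^sub>m a) C (0\<^sub>m m a) K) N"
  proof -
    define N where "N = four_block_mat (1\<^sub>m a) (- PA) (0\<^sub>m m a) (- PS)"
    have Nc: "N \<in> carrier_mat (a + m) (a + m)" unfolding N_def using PA PS by auto
    define Tq where "Tq = map_mat rat_of_int T"
    have Tq: "Tq \<in> carrier_mat m m" unfolding Tq_def using T by auto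
    have utq: "upper_triangular Tq" using Th T unfolding Tq_def is_hermite_def upper_triangular_def by auto
    have "det Tq = prod_list (diag_mat Tq)" by (rule det_upper_triangular[OF utq Tq])
    moreover have "\<forall>x\<in>set (diag_mat Tq). x > 0" using Th T unfolding Tq_def is_hermite_def diag_mat_def by auto
    ultimately have dTq: "det Tq \<noteq> 0" using prod_list_pos by force
    have U: "Tq \<in> Units (ring_mat TYPE(rat) m undefined)" by (rule det_non_zero_imp_unit[OF Tq dTq])
    have "mat_inverse Tq \<noteq> None" using mat_inverse(1)[OF Tq, of undefined] U by auto
    then obtain Ti where Ti: "mat_inverse Tq = Some Ti" by auto
    have TTi: "Tq * Ti = 1\<^sub>m m" and Tic: "Ti \<in> carrier_mat m m" using mat_inverse(2)[OF Tq Ti] by auto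
    have rinv: "rat_inv T = Ti" unfolding rat_inv_def Tq_def[symmetric] Ti by simp
    have fac: "map_mat rat_of_int (P * T) * rat_inv T = map_mat rat_of_int P" if P: "P \<in> carrier_mat r m" for P r
    proof -
      have "map_mat rat_of_int (P * T) = map_mat rat_of_int P * Tq" unfolding Tq_def
        by (rule of_int_hom.mat_hom_mult[OF P T])
      then have "map_mat rat_of_int (P * T) * rat_inv T = map_mat rat_of_int P * (Tq * Ti)"
        unfolding rinv using P Tq Tic by simp
      then show ?thesis unfolding TTi using P by simp
    qed
    have mapN: "map_mat rat_of_int N = blk2 (1\<^sub>m a) (- (map_mat rat_of_int A * rat_inv T))
               (0\<^sub>m m a) (- (map_mat rat_of_int S * rat_inv T))"
      unfolding N_def APT SPT fac[OF PA] fac[OF PS]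
      by (subst map_four_block_mat[of _ a a _ m _ m]) (use PA PS in \<open>auto intro!: cong_four_block_mat eq_matI\<close>)
    define WN where "WN = four_block_mat (1\<^sub>m a) (- (Z * W0)) (0\<^sub>m m a) (- W0)"
    have WNc: "WN \<in> carrier_mat (a + m) (a + m)" unfolding WN_def using Z W0 by auto
    have "WN * N = four_block_mat (1\<^sub>m a * 1\<^sub>m a + - (Z * W0) * 0\<^sub>m m a) (1\<^sub>m a * - PA + - (Z * W0) * - PS)
       (0\<^sub>m m a * 1\<^sub>m a + - W0 * 0\<^sub>m m a) (0\<^sub>m m a * - PA + - W0 * - PS)"
      unfolding WN_def N_def by (rule mult_four_block_mat) (use Z W0 PA PS in auto)
    also have "\<dots> = four_block_mat (1\<^sub>m a) C (0\<^sub>m m a) K"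
    proof (rule cong_four_block_mat)
      show "1\<^sub>m a * 1\<^sub>m a + - (Z * W0) * 0\<^sub>m m a = 1\<^sub>m a" using Z W0 by simp
      show "0\<^sub>m m a * 1\<^sub>m a + - W0 * 0\<^sub>m m a = 0\<^sub>m m a" using W0 by simp
      have z1: "0\<^sub>m m a * - PA = 0\<^sub>m m m" using PA by (intro eq_matI) auto
      have z2: "- W0 * - PS = W0 * PS" using W0 PS by simp
      have z3: "W0 * PS \<in> carrier_mat m m" using W0 PS by auto
      show "0\<^sub>m m a * - PA + - W0 * - PS = K" unfolding K_def z1 z2 using z3 by (rule left_add_zero_mat)
      have "- (Z * W0) * - PS = Z * K" unfolding K_def using Z W0 PS by simp
      then show "1\<^sub>m a * - PA + - (Z * W0) * - PS = C" unfolding C_def using PA by simp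
    qed
    finally have WN: "WN * N = four_block_mat (1\<^sub>m a) C (0\<^sub>m m a) K" .
    have "det WN = det (1\<^sub>m a) * det (- W0)" unfolding WN_def
      by (rule det_four_block_mat_lower_left_zero) (use Z W0 in auto)
    then have "is_unit (det WN)" using Y4i unimod_iff[OF Y4] unfolding Y4_def by simp
    then have WNi: "invertible_mat WN" using unimod_iff[OF WNc] by simp
    have "hermite_form_of (blk2 (1\<^sub>m a) C (0\<^sub>m m a) K) N"
      unfolding hermite_form_of_def unimodular_def using HCK WN WNc WNi Nc by auto
    then show ?thesis using Nc mapN by blast
  qed
  have p1: "hermite_form_of (blk4 (1\<^sub>m f) G (0\<^sub>m f a) Q
             (0\<^sub>m m f) T (0\<^sub>m m a) X
             (0\<^sub>m a f) (0\<^sub>m a m) (1\<^sub>m a) C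
             (0\<^sub>m m f) (0\<^sub>m m m) (0\<^sub>m m a) K) M" using part1 unfolding H_def .
  have p3: "\<exists>Y2 Y3 Y4 Ubar.
        Y2 \<in> carrier_mat f m \<and> Y3 \<in> carrier_mat a m \<and> Y4 \<in> carrier_mat m m \<and>
        Ubar = blk4 (1\<^sub>m f) Q (0\<^sub>m f a) Y2
                    (0\<^sub>m m f) (1\<^sub>m m) (0\<^sub>m m a) (0\<^sub>m m m)
                    (0\<^sub>m a f) C (1\<^sub>m a) Y3
                    (0\<^sub>m m f) K (0\<^sub>m m a) Y4 \<and>
        unimodular Ubar \<and>
        Ubar * M = blk4 (1\<^sub>m f) G (0\<^sub>m f a) Q
                        (0\<^sub>m m f) T (0\<^sub>m m a) (1\<^sub>m m)
                        (0\<^sub>m a f) (0\<^sub>m a m) (1\<^sub>m a) C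
                        (0\<^sub>m m f) (0\<^sub>m m m) (0\<^sub>m m a) K"
    apply (rule exI[of _ Y2], rule exI[of _ Y3], rule exI[of _ Y4], rule exI[of _ Ubar])
    apply (intro conjI Y2 Y3 Y4)
      apply (rule Ubar_def)
     apply (unfold unimodular_def, rule Ui)
    apply (unfold H'_def[symmetric], rule UM)
    done
  show ?thesis
    apply (rule exI[of _ G], rule exI[of _ Q], rule exI[of _ X], rule exI[of _ C], rule exI[of _ K])
    apply (intro conjI G Q X C K p1 part2 p3)
    done
qed

end
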